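(* Let $\mathcal{Y}=\{y_1,\dots,y_{n+1}\}\subset\mathbb{R}^n$ be affinely independent, $y_0\in\mathbb{R}^n$, $L>0$, with notation as in the context. Define $M=\operatorname{diag}(\ell_+)\,Y_+P_-(Y_-P_-)^{-1}\in\mathbb{R}^{|\mathcal{I}_+|\times(|\mathcal{I}_-|-1)}$ and real numbers $\{\mu_{ij}\}_{i\in\mathcal{I}_+,\,j\in\mathcal{I}_-}$ by $\mu_{ij}=[M]_{i,\,(j-n-2+|\mathcal{I}_-|)}$ for $(i,j)\in\mathcal{I}_+\times(\mathcal{I}_-\setminus\{0\})$ and $\mu_{i0}=\ell_i-\sum_{j\in\mathcal{I}_-\setminus\{0\}}\mu_{ij}$ for $i\in\mathcal{I}_+$. Then $$\sum_{j\in\mathcal{I}_-}\mu_{ij}=\ell_i\ \ (i\in\mathcal{I}_+),\qquad \sum_{i\in\mathcal{I}_+}\mu_{ij}=-\ell_j\ \ (j\in\mathcal{I}_-),$$ $$(LI-H^\star)\sum_{j\in\mathcal{I}_-}\mu_{ij}y_j=(LI-H^\star)\ell_iy_i\ \ (i\in\mathcal{I}_+),\qquad (LI+H^\star)\sum_{i\in\mathcal{I}_+}\mu_{ij}y_i=-(LI+H^\star)\ell_jy_j\ \ (j\in\mathcal{I}_-).$$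
   Context: The barycentric coordinates of $y_0$ w.r.t. $\mathcal{Y}$ are the unique reals $\ell_1,\dots,\ell_{n+1}$ with $\sum_{i=1}^{n+1}\ell_i=1$, $\sum_{i=1}^{n+1}\ell_iy_i=y_0$; set $\ell_0=-1$. The points are ordered so that $\ell_1\ge\cdots\ge\ell_{n+1}$. Let $\mathcal{I}_+=\{i\in\{0,\dots,n+1\}:\ell_i>0\}=\{1,\dots,|\mathcal{I}_+|\}$, $\mathcal{I}_-=\{i\in\{0,\dots,n+1\}:\ell_i<0\}=\{0\}\cup\{n+3-|\mathcal{I}_-|,\dots,n+1\}$. Let $G=\sum_{i=0}^{n+1}\ell_iy_iy_i^T$, with eigendecomposition $G=P\Lambda P^T$ ($P$ orthogonal, $\Lambda$ diagonal); $G$ has $|\mathcal{I}_+|-1$ positive and $|\mathcal{I}_-|-1$ negative eigenvalues. Let $P_+$ (resp. $P_-$) be the $n\times(|\mathcal{I}_+|-1)$ (resp. $n\times(|\mathcal{I}_-|-1)$) matrix of columns of $P$ belonging to positive (resp. negative) eigenvalues, and $H^\star=L\,P\,\mathrm{sign}(\Lambda)P^T=L(P_+P_+^T-P_-P_-^T)$ (entrywise sign, $\mathrm{sign}(0)=0$). Let $Y\in\mathbb{R}^{(n+1)\times n}$ have $i$th row $(y_i-y_0)^T$; $Y_+$ consists of its first $|\mathcal{I}_+|$ rows and $Y_-$ of its last $|\mathcal{I}_-|-1$ rows. Let $\ell_+=(\ell_1,\dots,\ell_{|\mathcal{I}_+|})^T$. The matrix $Y_-P_-$ is invertible. *)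

theory Defs
  imports "Jordan_Normal_Form.Gauss_Jordan_Elimination"
begin

definition affinely_independent_pts :: "nat \<Rightarrow> (nat \<Rightarrow> real vec) \<Rightarrow> bool" where
  "affinely_independent_pts n y \<longleftrightarrow>
     (\<forall>c :: nat \<Rightarrow> real.
        (\<Sum>i=1..n+1. c i) = 0 \<and> finsum_vec TYPE(real) n (\<lambda>i. c i \<cdot>\<^sub>v y i) {1..n+1} = 0\<^sub>v n
        \<longrightarrow> (\<forall>i\<in>{1..n+1}. c i = 0))"

definition Iplus :: "nat \<Rightarrow> (nat \<Rightarrow> real) \<Rightarrow> nat set" where
  "Iplus n l = {i\<in>{0..n+1}. l i > 0}"

definition Iminus :: "nat \<Rightarrow> (nat \<Rightarrow> real) \<Rightarrow> nat set" where
  "Iminus n l = {i\<in>{0..n+1}. l i < 0}"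

definition Gmat :: "nat \<Rightarrow> (nat \<Rightarrow> real vec) \<Rightarrow> (nat \<Rightarrow> real) \<Rightarrow> real mat" where
  "Gmat n y l = mat n n (\<lambda>(a,b). \<Sum>i=0..n+1. l i * (y i $ a) * (y i $ b))"

definition Hstar :: "nat \<Rightarrow> real \<Rightarrow> real mat \<Rightarrow> real mat \<Rightarrow> real mat" where
  "Hstar n L P Lam = L \<cdot>\<^sub>m (P * map_mat sgn Lam * transpose_mat P)"

definition Ymat :: "nat \<Rightarrow> (nat \<Rightarrow> real vec) \<Rightarrow> real mat" where
  "Ymat n y = mat_of_rows n (map (\<lambda>i. y i - y 0) [1..<n+2])"

definition Yplus :: "nat \<Rightarrow> (nat \<Rightarrow> real vec) \<Rightarrow> (nat \<Rightarrow> real) \<Rightarrow> real mat" where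
  "Yplus n y l = mat_of_rows n (map (row (Ymat n y)) [0..<card (Iplus n l)])"

definition Yminus :: "nat \<Rightarrow> (nat \<Rightarrow> real vec) \<Rightarrow> (nat \<Rightarrow> real) \<Rightarrow> real mat" where
  "Yminus n y l = mat_of_rows n (map (row (Ymat n y)) [n + 2 - card (Iminus n l)..<n+1])"

definition Pplus :: "nat \<Rightarrow> real mat \<Rightarrow> real mat \<Rightarrow> real mat" where
  "Pplus n P Lam = mat_of_cols n (map (col P) (filter (\<lambda>k. Lam $$ (k,k) > 0) [0..<n]))"

definition Pminus :: "nat \<Rightarrow> real mat \<Rightarrow> real mat \<Rightarrow> real mat" where
  "Pminus n P Lam = mat_of_cols n (map (col P) (filter (\<lambda>k. Lam $$ (k,k) < 0) [0..<n]))"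

definition diag_lplus :: "nat \<Rightarrow> (nat \<Rightarrow> real) \<Rightarrow> real mat" where
  "diag_lplus n l = (let p = card (Iplus n l) in mat p p (\<lambda>(a,b). if a = b then l (a+1) else 0))"

definition Mmat :: "nat \<Rightarrow> (nat \<Rightarrow> real vec) \<Rightarrow> (nat \<Rightarrow> real) \<Rightarrow> real mat \<Rightarrow> real mat \<Rightarrow> real mat" where
  "Mmat n y l P Lam = diag_lplus n l * Yplus n y l * Pminus n P Lam
      * the (mat_inverse (Yminus n y l * Pminus n P Lam))"

(* mu_{ij} = [M]_{i, j-n-2+|I_-|} (1-based) for j in I_- - {0};
   mu_{i0} = l_i - sum_{j in I_- - {0}} mu_{ij}.  JNF matrices are 0-based. *)
definition mu :: "nat \<Rightarrow> (nat \<Rightarrow> real vec) \<Rightarrow> (nat \<Rightarrow> real) \<Rightarrow> real mat \<Rightarrow> real mat \<Rightarrow> nat \<Rightarrow> nat \<Rightarrow> real" where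
  "mu n y l P Lam i j =
     (let M = Mmat n y l P Lam; q = card (Iminus n l) in
      if j = 0 then l i - (\<Sum>k\<in>Iminus n l - {0}. M $$ (i - 1, k + q - (n + 3)))
      else M $$ (i - 1, j + q - (n + 3)))"

end

theory Submission
  imports Defs "Jordan_Normal_Form.Determinant"
begin

declare sum.cl_ivl_Suc[simp del]


lemma dot_finsum:
  fixes v :: "real vec"
  assumes "finite I" "v \<in> carrier_vec n" "\<And>j. j \<in> I \<Longrightarrow> f j \<in> carrier_vec n"
  shows "v \<bullet> finsum_vec TYPE(real) n f I = (\<Sum>j\<in>I. v \<bullet> f j)"
proof -
  have fc: "f \<in> I \<rightarrow> carrier_vec n" using assms(3) by auto
  have cl: "finsum_vec TYPE(real) n f I \<in> carrier_vec n" by (rule finsum_vec_closed[OF fc])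
  have "v \<bullet> finsum_vec TYPE(real) n f I = (\<Sum>a<n. v $ a * (\<Sum>j\<in>I. f j $ a))"
    unfolding scalar_prod_def using cl index_finsum_vec[OF assms(1) _ fc]
    by (auto intro!: sum.cong simp: atLeast0LessThan)
  also have "\<dots> = (\<Sum>j\<in>I. \<Sum>a<n. v $ a * f j $ a)"
    by (simp add: sum_distrib_left sum.swap[of _ I])
  also have "\<dots> = (\<Sum>j\<in>I. v \<bullet> f j)"
    unfolding scalar_prod_def using assms(3)[THEN carrier_vecD] by (auto intro!: sum.cong simp: atLeast0LessThan)
  finally show ?thesis .
qed

lemma index_finsum_vec':
  fixes f :: "'c \<Rightarrow> real vec"
  assumes "finite I" "a < n" "\<And>j. j \<in> I \<Longrightarrow> f j \<in> carrier_vec n"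
  shows "finsum_vec TYPE(real) n f I $ a = (\<Sum>j\<in>I. f j $ a)"
  using index_finsum_vec[OF assms(1,2)] assms(3) by auto

lemma finsum_carrier:
  fixes f :: "'c \<Rightarrow> real vec"
  assumes "\<And>j. j \<in> I \<Longrightarrow> f j \<in> carrier_vec n"
  shows "finsum_vec TYPE(real) n f I \<in> carrier_vec n"
  by (rule finsum_vec_closed) (use assms in auto)

lemma PPT:
  fixes P :: "real mat"
  assumes P: "P \<in> carrier_mat n n" "transpose_mat P * P = 1\<^sub>m n"
  shows "P * transpose_mat P = 1\<^sub>m n"
  using mat_mult_left_right_inverse[OF _ P(1) P(2)] P(1) by auto

lemma smult_one_mv:
  fixes x :: "real vec"
  assumes "x \<in> carrier_vec n"
  shows "(L \<cdot>\<^sub>m 1\<^sub>m n) *\<^sub>v x = L \<cdot>\<^sub>v x"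
  using assms by (intro eq_vecI) auto

lemma smult_mv:
  fixes x :: "real vec" and A :: "real mat"
  assumes "x \<in> carrier_vec n" "A \<in> carrier_mat n n"
  shows "(L \<cdot>\<^sub>m A) *\<^sub>v x = L \<cdot>\<^sub>v (A *\<^sub>v x)"
  using assms by (intro eq_vecI) (auto simp: scalar_prod_smult_left)

lemma sgn_fix:
  fixes P Lam :: "real mat" and x :: "real vec"
  assumes P: "P \<in> carrier_mat n n" "transpose_mat P * P = 1\<^sub>m n"
    and Lam: "Lam \<in> carrier_mat n n" "diagonal_mat Lam"
    and x: "x \<in> carrier_vec n"
    and hz: "\<And>k. k < n \<Longrightarrow> sgn (Lam $$ (k,k)) \<noteq> c \<Longrightarrow> col P k \<bullet> x = 0"
  shows "(P * map_mat sgn Lam * transpose_mat P) *\<^sub>v x = c \<cdot>\<^sub>v x"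
proof -
  define z where "z = transpose_mat P *\<^sub>v x"
  have zc: "z \<in> carrier_vec n" using P x unfolding z_def by auto
  have zk: "z $ k = col P k \<bullet> x" if "k < n" for k
    using that P unfolding z_def by auto
  have Sz: "map_mat sgn Lam *\<^sub>v z = c \<cdot>\<^sub>v z"
  proof (rule eq_vecI)
    show "dim_vec (map_mat sgn Lam *\<^sub>v z) = dim_vec (c \<cdot>\<^sub>v z)" using Lam zc by auto
    fix k assume "k < dim_vec (c \<cdot>\<^sub>v z)"
    hence k: "k < n" using zc by auto
    have "(map_mat sgn Lam *\<^sub>v z) $ k = (\<Sum>j<n. sgn (Lam $$ (k,j)) * z $ j)"
      using k Lam zc by (auto simp: scalar_prod_def atLeast0LessThan row_def intro!: sum.cong)
    also have "\<dots> = sgn (Lam $$ (k,k)) * z $ k"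
      using k Lam unfolding diagonal_mat_def
      by (subst sum.remove[of _ k]) (auto intro!: sum.neutral)
    also have "\<dots> = c * z $ k"
      using hz[OF k] zk[OF k] by (cases "sgn (Lam $$ (k,k)) = c") auto
    finally show "(map_mat sgn Lam *\<^sub>v z) $ k = (c \<cdot>\<^sub>v z) $ k" using k zc by auto
  qed
  have "(P * map_mat sgn Lam * transpose_mat P) *\<^sub>v x = P *\<^sub>v (map_mat sgn Lam *\<^sub>v z)"
    unfolding z_def using P Lam x by (subst assoc_mult_mat_vec[of _ n n _ n]) auto
  also have "\<dots> = c \<cdot>\<^sub>v (P *\<^sub>v z)" unfolding Sz using P zc by (simp add: mult_mat_vec)
  also have "P *\<^sub>v z = x" unfolding z_def using P x PPT[OF P]
    by (subst assoc_mult_mat_vec[symmetric, of _ n n _ n]) auto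
  finally show ?thesis .
qed

lemma minus_zero:
  fixes P Lam :: "real mat" and x :: "real vec"
  assumes P: "P \<in> carrier_mat n n" "transpose_mat P * P = 1\<^sub>m n"
    and Lam: "Lam \<in> carrier_mat n n" "diagonal_mat Lam"
    and x: "x \<in> carrier_vec n"
    and hz: "\<And>k. k < n \<Longrightarrow> \<not> Lam $$ (k,k) > 0 \<Longrightarrow> col P k \<bullet> x = 0"
  shows "(L \<cdot>\<^sub>m 1\<^sub>m n - Hstar n L P Lam) *\<^sub>v x = 0\<^sub>v n"
proof -
  have H: "Hstar n L P Lam *\<^sub>v x = L \<cdot>\<^sub>v x"
  proof -
    have "Hstar n L P Lam *\<^sub>v x = L \<cdot>\<^sub>v ((P * map_mat sgn Lam * transpose_mat P) *\<^sub>v x)"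
      unfolding Hstar_def using P Lam x by (intro smult_mv) auto
    also have "(P * map_mat sgn Lam * transpose_mat P) *\<^sub>v x = 1 \<cdot>\<^sub>v x"
      by (rule sgn_fix[OF P Lam x]) (use hz in \<open>auto simp: sgn_if split: if_splits\<close>)
    finally show ?thesis by simp
  qed
  show ?thesis unfolding Hstar_def
    using P Lam x H[unfolded Hstar_def]
    by (subst minus_mult_distrib_mat_vec[of _ n n]) (auto simp: smult_one_mv)
qed

lemma plus_zero:
  fixes P Lam :: "real mat" and x :: "real vec"
  assumes P: "P \<in> carrier_mat n n" "transpose_mat P * P = 1\<^sub>m n"
    and Lam: "Lam \<in> carrier_mat n n" "diagonal_mat Lam"
    and x: "x \<in> carrier_vec n"
    and hz: "\<And>k. k < n \<Longrightarrow> \<not> Lam $$ (k,k) < 0 \<Longrightarrow> col P k \<bullet> x = 0"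
  shows "(L \<cdot>\<^sub>m 1\<^sub>m n + Hstar n L P Lam) *\<^sub>v x = 0\<^sub>v n"
proof -
  have H: "Hstar n L P Lam *\<^sub>v x = L \<cdot>\<^sub>v (-1 \<cdot>\<^sub>v x)"
  proof -
    have "Hstar n L P Lam *\<^sub>v x = L \<cdot>\<^sub>v ((P * map_mat sgn Lam * transpose_mat P) *\<^sub>v x)"
      unfolding Hstar_def using P Lam x by (intro smult_mv) auto
    also have "(P * map_mat sgn Lam * transpose_mat P) *\<^sub>v x = -1 \<cdot>\<^sub>v x"
      by (rule sgn_fix[OF P Lam x]) (use hz in \<open>auto simp: sgn_if split: if_splits\<close>)
    finally show ?thesis by simp
  qed
  show ?thesis unfolding Hstar_def
    using P Lam x H[unfolded Hstar_def]
    by (subst add_mult_distrib_mat_vec[of _ n n]) (auto simp: smult_one_mv)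
qed


lemma Iplus_eq:
  fixes l :: "nat \<Rightarrow> real"
  assumes l0: "l 0 = -1"
    and ord: "\<And>i j. 1 \<le> i \<Longrightarrow> i \<le> j \<Longrightarrow> j \<le> n + 1 \<Longrightarrow> l j \<le> l i"
  shows "Iplus n l = {1..card (Iplus n l)}"
proof -
  let ?A = "Iplus n l"
  have fin: "finite ?A" unfolding Iplus_def by auto
  have down: "i' \<in> ?A" if "i \<in> ?A" "1 \<le> i'" "i' \<le> i" for i i'
    using that ord[of i' i] unfolding Iplus_def by auto
  have A1: "i \<in> ?A \<Longrightarrow> 1 \<le> i" for i using l0 unfolding Iplus_def by (cases i) auto
  have "\<exists>m. ?A = {1..m}"
  proof (cases "?A = {}")
    case True thus ?thesis by (intro exI[of _ 0]) auto
  next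
    case False
    have "?A = {1..Max ?A}"
    proof (rule Set.set_eqI, rule iffI)
      fix x assume "x \<in> ?A" thus "x \<in> {1..Max ?A}" using A1 fin by auto
    next
      fix x assume "x \<in> {1..Max ?A}" thus "x \<in> ?A" using down[of "Max ?A" x] Max_in[OF fin False] by auto
    qed
    thus ?thesis by blast
  qed
  then obtain m where m: "?A = {1..m}" by blast
  thus ?thesis by simp
qed

lemma Iminus_eq:
  fixes l :: "nat \<Rightarrow> real"
  assumes l0: "l 0 = -1"
    and ord: "\<And>i j. 1 \<le> i \<Longrightarrow> i \<le> j \<Longrightarrow> j \<le> n + 1 \<Longrightarrow> l j \<le> l i"
  shows "Iminus n l = insert 0 {n + 3 - card (Iminus n l)..n+1}" "1 \<le> card (Iminus n l)"
    "card (Iminus n l) \<le> n + 2"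
proof -
  let ?A = "Iminus n l"
  let ?T = "Iminus n l - {0}"
  have fin: "finite ?T" unfolding Iminus_def by auto
  have up: "j' \<in> ?T" if "j \<in> ?T" "j \<le> j'" "j' \<le> n + 1" for j j'
    using that ord[of j j'] unfolding Iminus_def by auto
  have T1: "j \<in> ?T \<Longrightarrow> 1 \<le> j \<and> j \<le> n + 1" for j unfolding Iminus_def by auto
  have "\<exists>m. ?T = {m..n+1} \<and> 1 \<le> m \<and> m \<le> n + 2"
  proof (cases "?T = {}")
    case True thus ?thesis by (intro exI[of _ "n+2"]) auto
  next
    case False
    have "?T = {Min ?T..n+1}"
    proof (rule Set.set_eqI, rule iffI)
      fix x assume "x \<in> ?T" thus "x \<in> {Min ?T..n+1}" using T1 fin by auto
    next
      fix x assume "x \<in> {Min ?T..n+1}" thus "x \<in> ?T" using up[of "Min ?T" x] Min_in[OF fin False] by auto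
    qed
    moreover have "1 \<le> Min ?T" "Min ?T \<le> n + 2" using T1[OF Min_in[OF fin False]] by auto
    ultimately show ?thesis by blast
  qed
  then obtain m where m: "?T = {m..n+1}" "1 \<le> m" "m \<le> n + 2" by blast
  have z: "0 \<in> ?A" using l0 unfolding Iminus_def by auto
  hence A: "?A = insert 0 {m..n+1}" using m(1) by blast
  have c: "card ?A = n + 3 - m" unfolding A using m by auto
  have m': "n + 3 - card ?A = m" using c m by simp
  show "?A = insert 0 {n + 3 - card ?A..n+1}" unfolding m' by (rule A)
  show "1 \<le> card ?A" "card ?A \<le> n + 2" using c m by auto
qed

lemma card_sum:
  fixes l :: "nat \<Rightarrow> real"
  shows "card (Iplus n l) + card (Iminus n l) \<le> n + 2"
proof -
  have "card (Iplus n l \<union> Iminus n l) \<le> card {0..n+1}"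
    by (rule card_mono) (auto simp: Iplus_def Iminus_def)
  moreover have "card (Iplus n l \<union> Iminus n l) = card (Iplus n l) + card (Iminus n l)"
    by (rule card_Un_disjoint) (auto simp: Iplus_def Iminus_def)
  ultimately show ?thesis by simp
qed


lemma dot_comp:
  fixes u v :: "real vec"
  assumes "u \<in> carrier_vec n" "v \<in> carrier_vec n"
  shows "u \<bullet> v = (\<Sum>a<n. u $ a * v $ a)"
  using assms unfolding scalar_prod_def by (auto simp: atLeast0LessThan)

lemma y0comp:
  fixes y :: "nat \<Rightarrow> real vec" and l :: "nat \<Rightarrow> real"
  assumes dims: "\<And>i. i \<le> n + 1 \<Longrightarrow> y i \<in> carrier_vec n"
    and bary2: "finsum_vec TYPE(real) n (\<lambda>i. l i \<cdot>\<^sub>v y i) {1..n+1} = y 0"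
    and a: "a < n"
  shows "y 0 $ a = (\<Sum>i=1..n+1. l i * y i $ a)"
proof -
  have "y 0 $ a = (\<Sum>i=1..n+1. (l i \<cdot>\<^sub>v y i) $ a)"
    unfolding bary2[symmetric] by (rule index_finsum_vec') (use a dims in auto)
  also have "\<dots> = (\<Sum>i=1..n+1. l i * y i $ a)"
  proof (intro sum.cong refl)
    fix i assume "i \<in> {1..n+1}"
    then have "dim_vec (y i) = n" using dims by auto
    then show "(l i \<cdot>\<^sub>v y i) $ a = l i * y i $ a" using a by simp
  qed
  finally show ?thesis .
qed

lemma Xsum:
  fixes y :: "nat \<Rightarrow> real vec" and l :: "nat \<Rightarrow> real"
  assumes dims: "\<And>i. i \<le> n + 1 \<Longrightarrow> y i \<in> carrier_vec n"
    and bary2: "finsum_vec TYPE(real) n (\<lambda>i. l i \<cdot>\<^sub>v y i) {1..n+1} = y 0"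
    and x: "x \<in> carrier_vec n"
  shows "(\<Sum>i=1..n+1. l i * (y i \<bullet> x)) = y 0 \<bullet> x"
proof -
  have "(\<Sum>i=1..n+1. l i * (y i \<bullet> x)) = (\<Sum>i=1..n+1. \<Sum>a<n. l i * y i $ a * x $ a)"
    using dims x by (intro sum.cong refl) (auto simp: dot_comp[of _ n] sum_distrib_left mult.assoc)
  also have "\<dots> = (\<Sum>a<n. (\<Sum>i=1..n+1. l i * y i $ a) * x $ a)"
    by (subst sum.swap) (simp add: sum_distrib_right)
  also have "\<dots> = (\<Sum>a<n. y 0 $ a * x $ a)"
    using y0comp[OF dims bary2] by simp
  also have "\<dots> = y 0 \<bullet> x" using dims[of 0] x by (simp add: dot_comp[of _ n])
  finally show ?thesis .
qed

lemma W2: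
  fixes y :: "nat \<Rightarrow> real vec" and l :: "nat \<Rightarrow> real"
  assumes dims: "\<And>i. i \<le> n + 1 \<Longrightarrow> y i \<in> carrier_vec n"
    and bary1: "(\<Sum>i=1..n+1. l i) = 1"
    and bary2: "finsum_vec TYPE(real) n (\<lambda>i. l i \<cdot>\<^sub>v y i) {1..n+1} = y 0"
    and x: "x \<in> carrier_vec n"
  shows "(\<Sum>i=1..n+1. l i * ((y i - y 0) \<bullet> x)) = 0"
proof -
  have "(\<Sum>i=1..n+1. l i * ((y i - y 0) \<bullet> x)) = (\<Sum>i=1..n+1. l i * (y i \<bullet> x)) - (\<Sum>i=1..n+1. l i) * (y 0 \<bullet> x)"
    using dims x by (simp add: minus_scalar_prod_distrib[of _ n] sum_distrib_right right_diff_distrib sum_subtractf)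
  also have "\<dots> = 0" using Xsum[OF dims bary2 x] bary1 by simp
  finally show ?thesis .
qed

lemma W3:
  fixes y :: "nat \<Rightarrow> real vec" and l :: "nat \<Rightarrow> real"
  assumes dims: "\<And>i. i \<le> n + 1 \<Longrightarrow> y i \<in> carrier_vec n"
    and bary1: "(\<Sum>i=1..n+1. l i) = 1"
    and bary2: "finsum_vec TYPE(real) n (\<lambda>i. l i \<cdot>\<^sub>v y i) {1..n+1} = y 0"
    and l0: "l 0 = -1"
    and x: "x \<in> carrier_vec n" and p: "p \<in> carrier_vec n"
  shows "x \<bullet> (Gmat n y l *\<^sub>v p) = (\<Sum>i=1..n+1. l i * ((y i - y 0) \<bullet> x) * ((y i - y 0) \<bullet> p))"
proof -
  define X where "X i = y i \<bullet> x" for i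
  define Q where "Q i = y i \<bullet> p" for i
  have Gc: "Gmat n y l *\<^sub>v p \<in> carrier_vec n" unfolding Gmat_def by (rule mult_mat_vec_carrier[OF _ p]) auto
  have "x \<bullet> (Gmat n y l *\<^sub>v p) = (\<Sum>a<n. x $ a * (\<Sum>b<n. (\<Sum>i=0..n+1. l i * y i $ a * y i $ b) * p $ b))"
    using x p Gc by (auto simp: dot_comp[of _ n] Gmat_def intro!: sum.cong)
  also have "\<dots> = (\<Sum>a<n. \<Sum>b<n. \<Sum>i=0..n+1. l i * (y i $ a * x $ a) * (y i $ b * p $ b))"
    by (simp add: sum_distrib_left sum_distrib_right mult_ac)
  also have "\<dots> = (\<Sum>a<n. \<Sum>i=0..n+1. \<Sum>b<n. l i * (y i $ a * x $ a) * (y i $ b * p $ b))"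
    by (rule sum.cong[OF refl], rule sum.swap)
  also have "\<dots> = (\<Sum>i=0..n+1. \<Sum>a<n. \<Sum>b<n. l i * (y i $ a * x $ a) * (y i $ b * p $ b))"
    by (rule sum.swap)
  also have "\<dots> = (\<Sum>i=0..n+1. l i * X i * Q i)"
    unfolding X_def Q_def using dims x p
    by (intro sum.cong refl) (auto simp: dot_comp[of _ n] sum_distrib_left sum_distrib_right mult_ac)
  finally have L: "x \<bullet> (Gmat n y l *\<^sub>v p) = (\<Sum>i=0..n+1. l i * X i * Q i)" .
  have SX: "(\<Sum>i=1..n+1. l i * X i) = X 0" unfolding X_def by (rule Xsum[OF dims bary2 x])
  have SQ: "(\<Sum>i=1..n+1. l i * Q i) = Q 0" unfolding Q_def by (rule Xsum[OF dims bary2 p])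
  have "(\<Sum>i=1..n+1. l i * ((y i - y 0) \<bullet> x) * ((y i - y 0) \<bullet> p))
      = (\<Sum>i=1..n+1. l i * (X i - X 0) * (Q i - Q 0))"
    unfolding X_def Q_def using dims x p by (intro sum.cong refl) (simp add: minus_scalar_prod_distrib[of _ n])
  also have "\<dots> = (\<Sum>i=1..n+1. l i * X i * Q i) - Q 0 * (\<Sum>i=1..n+1. l i * X i)
      - X 0 * (\<Sum>i=1..n+1. l i * Q i) + X 0 * Q 0 * (\<Sum>i=1..n+1. l i)"
    by (simp add: sum_distrib_left sum_subtractf sum.distrib algebra_simps)
  also have "\<dots> = (\<Sum>i=1..n+1. l i * X i * Q i) - X 0 * Q 0" using SX SQ bary1 by simp
  also have "\<dots> = (\<Sum>i=0..n+1. l i * X i * Q i)"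
    using l0 sum.atLeast_Suc_atMost[of 0 "n+1" "\<lambda>i. l i * X i * Q i"] by simp
  finally show ?thesis using L by simp
qed


lemma Kern:
  fixes y :: "nat \<Rightarrow> real vec" and l :: "nat \<Rightarrow> real"
  assumes dims: "\<And>i. i \<le> n + 1 \<Longrightarrow> y i \<in> carrier_vec n"
    and aff: "affinely_independent_pts n y"
    and bary1: "(\<Sum>i=1..n+1. l i) = 1"
    and bary2: "finsum_vec TYPE(real) n (\<lambda>i. l i \<cdot>\<^sub>v y i) {1..n+1} = y 0"
    and l0: "l 0 = -1"
    and p: "p \<in> carrier_vec n"
    and G0: "\<And>x. x \<in> carrier_vec n \<Longrightarrow> x \<bullet> (Gmat n y l *\<^sub>v p) = 0"
    and i: "i \<in> {1..n+1}"
  shows "l i * ((y i - y 0) \<bullet> p) = 0"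
proof -
  define c where "c i = l i * ((y i - y 0) \<bullet> p)" for i
  have s0: "(\<Sum>i=1..n+1. c i) = 0" unfolding c_def by (rule W2[OF dims bary1 bary2 p])
  have comp: "(\<Sum>i=1..n+1. c i * y i $ a) = 0" if a: "a < n" for a
  proof -
    have u: "unit_vec n a \<in> carrier_vec n" by simp
    have wa: "(y i - y 0) \<bullet> unit_vec n a = y i $ a - y 0 $ a" if "i \<le> n + 1" for i
      using dims[OF that] dims[of 0] a by (subst scalar_prod_right_unit) auto
    have "0 = (\<Sum>i=1..n+1. l i * ((y i - y 0) \<bullet> unit_vec n a) * ((y i - y 0) \<bullet> p))"
      using G0[OF u] W3[OF dims bary1 bary2 l0 u p] by simp
    also have "\<dots> = (\<Sum>i=1..n+1. c i * (y i $ a - y 0 $ a))"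
      unfolding c_def using wa by (intro sum.cong refl) auto
    also have "\<dots> = (\<Sum>i=1..n+1. c i * y i $ a) - (\<Sum>i=1..n+1. c i) * y 0 $ a"
      by (simp add: right_diff_distrib sum_subtractf sum_distrib_right)
    finally show ?thesis using s0 by simp
  qed
  have fs: "finsum_vec TYPE(real) n (\<lambda>i. c i \<cdot>\<^sub>v y i) {1..n+1} = 0\<^sub>v n"
  proof (rule eq_vecI)
    have cl: "finsum_vec TYPE(real) n (\<lambda>i. c i \<cdot>\<^sub>v y i) {1..n+1} \<in> carrier_vec n"
      by (rule finsum_carrier) (use dims in auto)
    thus "dim_vec (finsum_vec TYPE(real) n (\<lambda>i. c i \<cdot>\<^sub>v y i) {1..n+1}) = dim_vec (0\<^sub>v n :: real vec)" by simp
    fix a assume "a < dim_vec (0\<^sub>v n :: real vec)"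
    hence a: "a < n" by simp
    have "finsum_vec TYPE(real) n (\<lambda>i. c i \<cdot>\<^sub>v y i) {1..n+1} $ a = (\<Sum>i=1..n+1. (c i \<cdot>\<^sub>v y i) $ a)"
      by (rule index_finsum_vec') (use a dims in auto)
    also have "\<dots> = (\<Sum>i=1..n+1. c i * y i $ a)"
    proof (intro sum.cong refl)
      fix i assume "i \<in> {1..n+1}"
      then have "dim_vec (y i) = n" using dims by auto
      then show "(c i \<cdot>\<^sub>v y i) $ a = c i * y i $ a" using a by simp
    qed
    finally show "finsum_vec TYPE(real) n (\<lambda>i. c i \<cdot>\<^sub>v y i) {1..n+1} $ a = 0\<^sub>v n $ a"
      using comp[OF a] a by simp
  qed
  from aff s0 fs have "\<forall>i\<in>{1..n+1}. c i = 0" unfolding affinely_independent_pts_def by blast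
  thus ?thesis using i unfolding c_def by auto
qed

lemma orthonormal:
  fixes P :: "real mat"
  assumes P: "P \<in> carrier_mat n n" "transpose_mat P * P = 1\<^sub>m n" and k: "k < n" and m: "m < n"
  shows "col P m \<bullet> col P k = (if m = k then 1 else 0)"
proof -
  have "(transpose_mat P * P) $$ (m,k) = col P m \<bullet> col P k" using P(1) k m by auto
  hence "col P m \<bullet> col P k = 1\<^sub>m n $$ (m,k)" using P(2) by simp
  thus ?thesis using k m by simp
qed

lemma eigvec:
  fixes P Lam G :: "real mat"
  assumes P: "P \<in> carrier_mat n n" "transpose_mat P * P = 1\<^sub>m n"
    and Lam: "Lam \<in> carrier_mat n n" "diagonal_mat Lam"
    and eig: "G = P * Lam * transpose_mat P" and k: "k < n"
  shows "G *\<^sub>v col P k = Lam $$ (k,k) \<cdot>\<^sub>v col P k"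
proof -
  have c: "col P k \<in> carrier_vec n" using P k by auto
  have t: "transpose_mat P *\<^sub>v col P k = unit_vec n k"
  proof -
    have "transpose_mat P *\<^sub>v col P k = col (transpose_mat P * P) k"
      using P k by (subst col_mult2[of _ n n _ n]) auto
    thus ?thesis using P(2) k by simp
  qed
  have l: "Lam *\<^sub>v unit_vec n k = Lam $$ (k,k) \<cdot>\<^sub>v unit_vec n k"
  proof (rule eq_vecI)
    show "dim_vec (Lam *\<^sub>v unit_vec n k) = dim_vec (Lam $$ (k,k) \<cdot>\<^sub>v unit_vec n k)" using Lam by simp
    fix i assume "i < dim_vec (Lam $$ (k,k) \<cdot>\<^sub>v unit_vec n k)"
    hence i: "i < n" by simp
    have "(Lam *\<^sub>v unit_vec n k) $ i = Lam $$ (i,k)"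
      using i k Lam by (simp add: scalar_prod_right_unit)
    thus "(Lam *\<^sub>v unit_vec n k) $ i = (Lam $$ (k,k) \<cdot>\<^sub>v unit_vec n k) $ i"
      using i k Lam unfolding diagonal_mat_def by (auto simp: unit_vec_def)
  qed
  have pu: "P *\<^sub>v unit_vec n k = col P k"
    using P k by (intro eq_vecI) (auto simp: scalar_prod_right_unit)
  have "G *\<^sub>v col P k = P *\<^sub>v (Lam *\<^sub>v (transpose_mat P *\<^sub>v col P k))"
    unfolding eig using P Lam c by (simp add: assoc_mult_mat_vec[of _ n n _ n])
  also have "\<dots> = Lam $$ (k,k) \<cdot>\<^sub>v col P k"
    unfolding t l using P by (simp add: mult_mat_vec pu)
  finally show ?thesis .
qed


lemma mv_eq_diff:
  fixes A :: "real mat"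
  assumes A: "A \<in> carrier_mat n n" and u: "u \<in> carrier_vec n" and v: "v \<in> carrier_vec n"
    and z: "A *\<^sub>v (u - v) = 0\<^sub>v n"
  shows "A *\<^sub>v u = A *\<^sub>v v"
proof (rule eq_vecI)
  show "dim_vec (A *\<^sub>v u) = dim_vec (A *\<^sub>v v)" using A by simp
  fix a assume "a < dim_vec (A *\<^sub>v v)"
  hence a: "a < n" using A by simp
  have "(A *\<^sub>v (u - v)) $ a = 0" using z a by simp
  moreover have "(A *\<^sub>v (u - v)) $ a = (A *\<^sub>v u) $ a - (A *\<^sub>v v) $ a"
    using A u v a by (simp add: scalar_prod_minus_distrib[of _ n])
  ultimately show "(A *\<^sub>v u) $ a = (A *\<^sub>v v) $ a" by simp
qed

lemma mv_eq_sum: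
  fixes A :: "real mat"
  assumes A: "A \<in> carrier_mat n n" and u: "u \<in> carrier_vec n" and v: "v \<in> carrier_vec n"
    and z: "A *\<^sub>v (u + v) = 0\<^sub>v n"
  shows "A *\<^sub>v u = - (A *\<^sub>v v)"
proof (rule eq_vecI)
  show "dim_vec (A *\<^sub>v u) = dim_vec (- (A *\<^sub>v v))" using A by simp
  fix a assume "a < dim_vec (- (A *\<^sub>v v))"
  hence a: "a < n" using A by simp
  have "(A *\<^sub>v (u + v)) $ a = 0" using z a by simp
  moreover have "(A *\<^sub>v (u + v)) $ a = (A *\<^sub>v u) $ a + (A *\<^sub>v v) $ a"
    using A u v a by (simp add: scalar_prod_add_distrib[of _ n])
  ultimately show "(A *\<^sub>v u) $ a = (- (A *\<^sub>v v)) $ a" using A a by simp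
qed

lemma shift_sum:
  fixes h :: "nat \<Rightarrow> real"
  assumes "s + m = N + 1"
  shows "(\<Sum>j\<in>{s..N}. h j) = (\<Sum>r<m. h (r + s))"
proof -
  have e: "{s..N} = (\<lambda>r. r + s) ` {..<m}"
  proof (rule Set.set_eqI, rule iffI)
    fix x assume "x \<in> {s..N}" thus "x \<in> (\<lambda>r. r + s) ` {..<m}" using assms
      by (intro image_eqI[of _ _ "x - s"]) auto
  qed (use assms in auto)
  show ?thesis unfolding e by (subst sum.reindex) (auto simp: inj_on_def)
qed


lemma mult_entry:
  fixes A C :: "real mat"
  assumes "A \<in> carrier_mat a b" "C \<in> carrier_mat b d" "i < a" "j < d"
  shows "(A * C) $$ (i,j) = (\<Sum>c<b. A $$ (i,c) * C $$ (c,j))"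
  using assms by (auto simp: scalar_prod_def atLeast0LessThan intro!: sum.cong)

theorem lemma4p3:
  fixes n :: nat and y :: "nat \<Rightarrow> real vec" and l :: "nat \<Rightarrow> real"
    and L :: real and P Lam :: "real mat"
  assumes dims: "\<And>i. i \<le> n + 1 \<Longrightarrow> y i \<in> carrier_vec n"
    and aff: "affinely_independent_pts n y"
    and Lpos: "L > 0"
    and bary1: "(\<Sum>i=1..n+1. l i) = 1"
    and bary2: "finsum_vec TYPE(real) n (\<lambda>i. l i \<cdot>\<^sub>v y i) {1..n+1} = y 0"
    and l0: "l 0 = -1"
    and ord: "\<And>i j. 1 \<le> i \<Longrightarrow> i \<le> j \<Longrightarrow> j \<le> n + 1 \<Longrightarrow> l j \<le> l i"
    and P: "P \<in> carrier_mat n n" "transpose_mat P * P = 1\<^sub>m n"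
    and Lam: "Lam \<in> carrier_mat n n" "diagonal_mat Lam"
    and eig: "Gmat n y l = P * Lam * transpose_mat P"
    and inv: "invertible_mat (Yminus n y l * Pminus n P Lam)"
  shows "(\<forall>i\<in>Iplus n l. (\<Sum>j\<in>Iminus n l. mu n y l P Lam i j) = l i)
    \<and> (\<forall>j\<in>Iminus n l. (\<Sum>i\<in>Iplus n l. mu n y l P Lam i j) = - l j)
    \<and> (\<forall>i\<in>Iplus n l.
         (L \<cdot>\<^sub>m 1\<^sub>m n - Hstar n L P Lam) *\<^sub>v
            finsum_vec TYPE(real) n (\<lambda>j. mu n y l P Lam i j \<cdot>\<^sub>v y j) (Iminus n l)
       = (L \<cdot>\<^sub>m 1\<^sub>m n - Hstar n L P Lam) *\<^sub>v (l i \<cdot>\<^sub>v y i))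
    \<and> (\<forall>j\<in>Iminus n l.
         (L \<cdot>\<^sub>m 1\<^sub>m n + Hstar n L P Lam) *\<^sub>v
            finsum_vec TYPE(real) n (\<lambda>i. mu n y l P Lam i j \<cdot>\<^sub>v y i) (Iplus n l)
       = - ((L \<cdot>\<^sub>m 1\<^sub>m n + Hstar n L P Lam) *\<^sub>v (l j \<cdot>\<^sub>v y j)))"
proof -
  define p where "p = card (Iplus n l)"
  define q where "q = card (Iminus n l)"
  define s where "s = n + 3 - q"
  define w where "w i = y i - y 0" for i
  have Ip: "Iplus n l = {1..p}" unfolding p_def by (rule Iplus_eq[of l n, OF l0 ord])
  have q12: "1 \<le> q" "q \<le> n + 2" unfolding q_def using Iminus_eq[of l n, OF l0 ord] by auto
  have Im: "Iminus n l = insert 0 {s..n+1}" unfolding s_def q_def using Iminus_eq[of l n, OF l0 ord] by auto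
  have pq: "p + q \<le> n + 2" unfolding p_def q_def by (rule card_sum)
  have s1: "1 \<le> s" "p < s" "s + (q - 1) = n + 2" using q12 pq unfolding s_def by auto
  have lpos: "0 < l i" if "i \<in> {1..p}" for i using that Ip unfolding Iplus_def by blast
  have lneg: "l j < 0" if "j \<in> {s..n+1}" for j using that Im unfolding Iminus_def by blast
  have lzero: "l i = 0" if "i \<in> {1..n+1}" "i \<notin> {1..p}" "i \<notin> {s..n+1}" for i
  proof -
    have "i \<notin> Iplus n l" "i \<notin> Iminus n l" using that Ip Im by auto
    thus ?thesis using that unfolding Iplus_def Iminus_def by auto
  qed
  have wc: "w i \<in> carrier_vec n" if "i \<le> n + 1" for i unfolding w_def using dims[OF that] dims[of 0] by auto
  have w0: "w 0 = 0\<^sub>v n" unfolding w_def using dims[of 0] by auto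
  have split: "(\<Sum>i=1..n+1. l i * f i) = (\<Sum>i=1..p. l i * f i) + (\<Sum>r<q-1. l (r + s) * f (r + s))" for f
  proof -
    have "(\<Sum>i=1..n+1. l i * f i) = (\<Sum>i\<in>{1..p} \<union> {s..n+1}. l i * f i)"
      by (rule sum.mono_neutral_right) (use lzero s1 pq in auto)
    also have "\<dots> = (\<Sum>i=1..p. l i * f i) + (\<Sum>i=s..n+1. l i * f i)"
      by (rule sum.union_disjoint) (use s1 in auto)
    also have "(\<Sum>i=s..n+1. l i * f i) = (\<Sum>r<q-1. l (r + s) * f (r + s))"
      by (rule shift_sum) (use s1 in auto)
    finally show ?thesis .
  qed
  have Yrow: "row (Ymat n y) r = w (r + 1)" if "r < n + 1" for r
  proof -
    have e: "map (\<lambda>i. y i - y 0) [1..<n+2] ! r = y (r + 1) - y 0"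
      using that by (subst nth_map_upt) auto
    show ?thesis unfolding Ymat_def w_def using that dims dims[of 0]
      by (subst mat_of_rows_row) (auto simp: e simp del: upt_Suc)
  qed
  define Yp where "Yp = Yplus n y l"
  define Ym where "Ym = Yminus n y l"
  define fl where "fl = filter (\<lambda>k. Lam $$ (k,k) < 0) [0..<n]"
  define Pm where "Pm = Pminus n P Lam"
  have Ypc: "Yp \<in> carrier_mat p n" unfolding Yp_def Yplus_def p_def by auto
  have Yprow: "row Yp a = w (a + 1)" if "a < p" for a
  proof -
    have e: "map (row (Ymat n y)) [0..<p] ! a = w (a + 1)"
      using that s1 q12 pq by (subst nth_map_upt) (auto simp: Yrow simp del: upt_Suc)
    show ?thesis unfolding Yp_def Yplus_def p_def[symmetric] using that s1 wc[of "a+1"] q12 pq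
      by (subst mat_of_rows_row) (auto simp: e simp del: upt_Suc)
  qed
  have Ymc: "Ym \<in> carrier_mat (q - 1) n" unfolding Ym_def Yminus_def q_def[symmetric] using q12 by auto
  have Ymrow: "row Ym r = w (r + s)" if "r < q - 1" for r
  proof -
    have e: "map (row (Ymat n y)) [n + 2 - q..<n+1] ! r = w (r + s)"
    proof -
      have "n + 2 - q + r + 1 = r + s" using that q12 unfolding s_def by simp
      thus ?thesis using that s1 q12 pq by (subst nth_map_upt) (auto simp: Yrow simp del: upt_Suc)
    qed
    have len: "r < length (map (row (Ymat n y)) [n + 2 - q..<n+1])" using that q12 by (simp del: upt_Suc)
    have "row (mat_of_rows n (map (row (Ymat n y)) [n + 2 - q..<n+1])) r = map (row (Ymat n y)) [n + 2 - q..<n+1] ! r"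
      by (rule mat_of_rows_row[OF len]) (unfold e, rule wc, use that s1 in simp)
    then show ?thesis unfolding Ym_def Yminus_def q_def[symmetric] e .
  qed
  have Pmc: "Pm \<in> carrier_mat n (length fl)" unfolding Pm_def Pminus_def fl_def by auto
  have Pmcol: "col Pm c = col P (fl ! c)" if "c < length fl" for c
  proof -
    have "fl ! c \<in> set fl" using that by auto
    hence "fl ! c < n" unfolding fl_def by auto
    thus ?thesis unfolding Pm_def Pminus_def fl_def[symmetric] using that P
      by (subst col_mat_of_cols) auto
  qed
  have flneg: "Lam $$ (fl ! c, fl ! c) < 0" "fl ! c < n" if "c < length fl" for c
  proof -
    have "fl ! c \<in> set fl" using that by auto
    thus "Lam $$ (fl ! c, fl ! c) < 0" "fl ! c < n" unfolding fl_def by auto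
  qed
  define B where "B = Ym * Pm"
  have kq: "length fl = q - 1"
    using inv Ymc Pmc unfolding B_def Ym_def Pm_def invertible_mat_def square_mat.simps by auto
  have Bc: "B \<in> carrier_mat (q - 1) (q - 1)" unfolding B_def using Ymc Pmc kq by auto
  obtain Inv where BI: "B * Inv = 1\<^sub>m (q - 1)" "Inv * B = 1\<^sub>m (q - 1)" "Inv \<in> carrier_mat (q - 1) (q - 1)"
    and InvD: "the (mat_inverse B) = Inv"
  proof (cases "mat_inverse B")
    case None
    have "B \<in> Units (ring_mat TYPE(real) (q - 1) ())"
    proof -
      from inv obtain X where X: "B * X = 1\<^sub>m (dim_row B)" "X * B = 1\<^sub>m (dim_row X)"
        unfolding invertible_mat_def inverts_mat_def B_def Ym_def Pm_def by auto
      have Xc: "X \<in> carrier_mat (q - 1) (q - 1)"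
        using arg_cong[OF X(1), of dim_col] arg_cong[OF X(2), of dim_col] Bc by auto
      show ?thesis unfolding Units_def ring_mat_simps using Bc Xc X by (auto intro!: bexI[of _ X])
    qed
    thus ?thesis using mat_inverse(1)[OF Bc None, where b="()"] by blast
  next
    case (Some C)
    thus ?thesis using that mat_inverse(2)[OF Bc Some] by auto
  qed
  define D where "D = diag_lplus n l"
  define X where "X = D * Yp * Pm"
  define Mm where "Mm = Mmat n y l P Lam"
  have Dc: "D \<in> carrier_mat p p" unfolding D_def diag_lplus_def p_def by (simp add: Let_def)
  have Xc: "X \<in> carrier_mat p (q - 1)" unfolding X_def using Dc Ypc Pmc kq by auto
  have MX: "Mm = X * Inv" unfolding Mm_def Mmat_def X_def D_def Yp_def Pm_def
    using InvD unfolding B_def Ym_def Pm_def by simp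
  have Mc: "Mm \<in> carrier_mat p (q - 1)" unfolding MX using Xc BI by auto
  have rowD: "row D a = l (a + 1) \<cdot>\<^sub>v unit_vec p a" if "a < p" for a
    using that Dc unfolding D_def diag_lplus_def p_def[symmetric]
    by (intro eq_vecI) (auto simp: Let_def unit_vec_def)
  have Xe: "X $$ (a,c) = l (a + 1) * (w (a + 1) \<bullet> col Pm c)" if "a < p" "c < q - 1" for a c
  proof -
    have YPc: "Yp * Pm \<in> carrier_mat p (q - 1)" using Ypc Pmc kq by auto
    have "X = D * (Yp * Pm)" unfolding X_def using Dc Ypc Pmc by (rule assoc_mult_mat)
    hence "X $$ (a,c) = row D a \<bullet> col (Yp * Pm) c" using that Dc YPc by auto
    also have "\<dots> = l (a + 1) * (unit_vec p a \<bullet> col (Yp * Pm) c)"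
      unfolding rowD[OF that(1)] using YPc that by (subst scalar_prod_smult_left) auto
    also have "unit_vec p a \<bullet> col (Yp * Pm) c = (Yp * Pm) $$ (a,c)"
    proof -
      have rY: "dim_row Yp = p" "dim_col Pm = q - 1" using carrier_matD[OF Ypc] carrier_matD[OF Pmc] kq by auto
      have cv: "col (Yp * Pm) c \<in> carrier_vec p" by (rule carrier_vecI) (simp add: rY)
      have "unit_vec p a \<bullet> col (Yp * Pm) c = col (Yp * Pm) c $ a"
        by (rule scalar_prod_left_unit[OF cv that(1)])
      also have "\<dots> = (Yp * Pm) $$ (a,c)"
        by (rule index_col) (use that in \<open>simp_all add: rY\<close>)
      finally show ?thesis .
    qed
    also have "\<dots> = w (a + 1) \<bullet> col Pm c" using YPc that Ypc Pmc kq by (simp add: Yprow)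
    finally show ?thesis .
  qed
  have Be: "B $$ (r,c) = w (r + s) \<bullet> col Pm c" if "r < q - 1" "c < q - 1" for r c
    unfolding B_def using that Ymc Pmc kq by (simp add: Ymrow)
  have Me: "Mm $$ (a,r) = (\<Sum>c<q-1. X $$ (a,c) * Inv $$ (c,r))" if "a < p" "r < q - 1" for a r
    unfolding MX by (rule mult_entry[OF Xc BI(3) that])
  have MB: "Mm * B = X" unfolding MX using Xc BI Bc
    by (simp add: assoc_mult_mat[of X p "q-1" Inv "q-1" B "q-1"])
  have muj: "mu n y l P Lam i j = Mm $$ (i - 1, j - s)" if "j \<in> {s..n+1}" for i j
  proof -
    have "j \<noteq> 0" "j + q - (n + 3) = j - s" using that s1 q12 unfolding s_def by auto
    thus ?thesis unfolding mu_def Mm_def[symmetric] q_def[symmetric] Let_def by simp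
  qed
  have mu0: "mu n y l P Lam i 0 = l i - (\<Sum>k\<in>{s..n+1}. Mm $$ (i - 1, k - s))" for i
  proof -
    have e: "Iminus n l - {0} = {s..n+1}" using Im s1 by auto
    have "(\<Sum>k\<in>{s..n+1}. Mm $$ (i - 1, k + q - (n + 3))) = (\<Sum>k\<in>{s..n+1}. Mm $$ (i - 1, k - s))"
      using s1 q12 unfolding s_def by (intro sum.cong refl) (auto intro!: arg_cong[of _ _ "\<lambda>t. Mm $$ (i - 1, t)"])
    thus ?thesis unfolding mu_def Mm_def[symmetric] q_def[symmetric] Let_def e by simp
  qed
  have cmc: "col Pm c \<in> carrier_vec n" for c using Pmc by auto
  have W2': "(\<Sum>i=1..n+1. l i * (w i \<bullet> x)) = 0" if "x \<in> carrier_vec n" for x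
    unfolding w_def by (rule W2[OF dims bary1 bary2 that])
  have orth: "(\<Sum>i=1..p. l i * (w i \<bullet> col Pm c)) = - (\<Sum>r<q-1. l (r + s) * B $$ (r,c))" if "c < q - 1" for c
    using split[of "\<lambda>i. w i \<bullet> col Pm c"] W2'[OF cmc[of c]] Be[OF _ that] by simp
  have colsum: "(\<Sum>i=1..p. Mm $$ (i - 1, r)) = - l (r + s)" if r: "r < q - 1" for r
  proof -
    have "(\<Sum>i=1..p. Mm $$ (i - 1, r)) = (\<Sum>i=1..p. \<Sum>c<q-1. l i * (w i \<bullet> col Pm c) * Inv $$ (c,r))"
      using r by (intro sum.cong refl) (auto simp: Me Xe)
    also have "\<dots> = (\<Sum>c<q-1. (\<Sum>i=1..p. l i * (w i \<bullet> col Pm c)) * Inv $$ (c,r))"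
      by (subst sum.swap) (simp add: sum_distrib_right)
    also have "\<dots> = (\<Sum>c<q-1. - (\<Sum>r'<q-1. l (r' + s) * B $$ (r',c)) * Inv $$ (c,r))"
      by (rule sum.cong[OF refl], subst orth) auto
    also have "\<dots> = - (\<Sum>c<q-1. \<Sum>r'<q-1. l (r' + s) * B $$ (r',c) * Inv $$ (c,r))"
      by (simp add: sum_distrib_right sum_negf)
    also have "\<dots> = - (\<Sum>r'<q-1. \<Sum>c<q-1. l (r' + s) * B $$ (r',c) * Inv $$ (c,r))"
      by (subst sum.swap) (rule refl)
    also have "\<dots> = - (\<Sum>r'<q-1. l (r' + s) * (\<Sum>c<q-1. B $$ (r',c) * Inv $$ (c,r)))"
      by (simp add: sum_distrib_left mult.assoc)
    also have "\<dots> = - (\<Sum>r'<q-1. l (r' + s) * (1\<^sub>m (q - 1)) $$ (r', r))"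
    proof (intro arg_cong[of _ _ uminus] sum.cong refl)
      fix r' assume rr: "r' \<in> {..<q-1}"
      have "(\<Sum>c<q-1. B $$ (r',c) * Inv $$ (c,r)) = (B * Inv) $$ (r', r)"
        using mult_entry[OF Bc BI(3), of r' r] rr r by simp
      also have "\<dots> = 1\<^sub>m (q - 1) $$ (r', r)" by (simp only: BI(1))
      finally show "l (r' + s) * (\<Sum>c<q-1. B $$ (r',c) * Inv $$ (c,r)) = l (r' + s) * 1\<^sub>m (q - 1) $$ (r', r)" by simp
    qed
    also have "\<dots> = - l (r + s)"
      using r by (simp add: sum.delta' if_distrib[of "\<lambda>x. _ * x"] cong: if_cong)
    finally show ?thesis .
  qed
  have C1: "\<forall>i\<in>Iplus n l. (\<Sum>j\<in>Iminus n l. mu n y l P Lam i j) = l i"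
  proof
    fix i assume "i \<in> Iplus n l"
    have "(\<Sum>j\<in>Iminus n l. mu n y l P Lam i j) = mu n y l P Lam i 0 + (\<Sum>j\<in>{s..n+1}. mu n y l P Lam i j)"
      unfolding Im using s1 by (subst sum.insert) auto
    also have "\<dots> = l i" using muj by (simp add: mu0)
    finally show "(\<Sum>j\<in>Iminus n l. mu n y l P Lam i j) = l i" .
  qed
  have C2: "\<forall>j\<in>Iminus n l. (\<Sum>i\<in>Iplus n l. mu n y l P Lam i j) = - l j"
  proof
    fix j assume j: "j \<in> Iminus n l"
    show "(\<Sum>i\<in>Iplus n l. mu n y l P Lam i j) = - l j"
    proof (cases "j = 0")
      case False
      hence js: "j \<in> {s..n+1}" "j - s < q - 1" using j Im s1 by auto
      have "(\<Sum>i\<in>Iplus n l. mu n y l P Lam i j) = (\<Sum>i=1..p. Mm $$ (i - 1, j - s))"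
        unfolding Ip using js by (simp add: muj)
      also have "\<dots> = - l j" using colsum[OF js(2)] js by simp
      finally show ?thesis .
    next
      case True
      have "(\<Sum>i\<in>Iplus n l. mu n y l P Lam i j) = (\<Sum>i=1..p. l i) - (\<Sum>k\<in>{s..n+1}. \<Sum>i=1..p. Mm $$ (i - 1, k - s))"
        unfolding Ip True mu0 sum_subtractf
        using sum.swap[where A="{1..p}" and B="{s..n+1}" and g="\<lambda>i k. Mm $$ (i - 1, k - s)"] by simp
      also have "(\<Sum>k\<in>{s..n+1}. \<Sum>i=1..p. Mm $$ (i - 1, k - s)) = (\<Sum>k\<in>{s..n+1}. - l k)"
      proof (rule sum.cong[OF refl])
        fix k assume k: "k \<in> {s..n+1}"
        hence kk: "k - s < q - 1" using s1 by auto
        show "(\<Sum>i=1..p. Mm $$ (i - 1, k - s)) = - l k" using colsum[OF kk] k by simp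
      qed
      also have "(\<Sum>k\<in>{s..n+1}. - l k) = - (\<Sum>r<q-1. l (r + s))"
        by (subst shift_sum[of s "q-1"]) (use s1 in \<open>auto simp: sum_negf\<close>)
      also have "(\<Sum>i=1..p. l i) - - (\<Sum>r<q-1. l (r + s)) = (\<Sum>i=1..n+1. l i * 1)"
        using split[of "\<lambda>_. 1"] by simp
      finally show ?thesis using bary1 True l0 by simp
    qed
  qed
  have Gsum: "(\<Sum>i=1..p. Mm $$ (i - 1, r0) * g i) = - l (r0 + s) * g (r0 + s)"
    if orthg: "\<And>c. c < q - 1 \<Longrightarrow> (\<Sum>i=1..p. l i * (w i \<bullet> col Pm c) * g i) = - (\<Sum>r<q-1. l (r + s) * B $$ (r,c) * g (r + s))"
      and r: "r0 < q - 1" for g r0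
  proof -
    have "(\<Sum>i=1..p. Mm $$ (i - 1, r0) * g i) = (\<Sum>i=1..p. \<Sum>c<q-1. l i * (w i \<bullet> col Pm c) * g i * Inv $$ (c,r0))"
    proof (rule sum.cong[OF refl])
      fix i assume i: "i \<in> {1..p}"
      have "Mm $$ (i - 1, r0) = (\<Sum>c<q-1. X $$ (i - 1,c) * Inv $$ (c,r0))" by (rule Me) (use i r in auto)
      also have "\<dots> = (\<Sum>c<q-1. l i * (w i \<bullet> col Pm c) * Inv $$ (c,r0))"
      proof (rule sum.cong[OF refl])
        fix c assume cc: "c \<in> {..<q-1}"
        have "X $$ (i - 1,c) = l (i - 1 + 1) * (w (i - 1 + 1) \<bullet> col Pm c)" by (rule Xe) (use i cc in auto)
        thus "X $$ (i - 1,c) * Inv $$ (c,r0) = l i * (w i \<bullet> col Pm c) * Inv $$ (c,r0)"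
          using i by simp
      qed
      finally show "Mm $$ (i - 1, r0) * g i = (\<Sum>c<q-1. l i * (w i \<bullet> col Pm c) * g i * Inv $$ (c,r0))"
        by (simp add: sum_distrib_right sum_distrib_left mult_ac)
    qed
    also have "\<dots> = (\<Sum>c<q-1. \<Sum>i=1..p. l i * (w i \<bullet> col Pm c) * g i * Inv $$ (c,r0))"
      by (rule sum.swap)
    also have "\<dots> = (\<Sum>c<q-1. (\<Sum>i=1..p. l i * (w i \<bullet> col Pm c) * g i) * Inv $$ (c,r0))"
      by (simp add: sum_distrib_right)
    also have "\<dots> = (\<Sum>c<q-1. - (\<Sum>r<q-1. l (r + s) * B $$ (r,c) * g (r + s)) * Inv $$ (c,r0))"
      by (rule sum.cong[OF refl], subst orthg) auto
    also have "\<dots> = - (\<Sum>c<q-1. \<Sum>r'<q-1. l (r' + s) * g (r' + s) * (B $$ (r',c) * Inv $$ (c,r0)))"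
      by (simp add: sum_distrib_right sum_distrib_left sum_negf mult_ac)
    also have "\<dots> = - (\<Sum>r'<q-1. \<Sum>c<q-1. l (r' + s) * g (r' + s) * (B $$ (r',c) * Inv $$ (c,r0)))"
      by (subst sum.swap) (rule refl)
    also have "\<dots> = - (\<Sum>r'<q-1. l (r' + s) * g (r' + s) * (\<Sum>c<q-1. B $$ (r',c) * Inv $$ (c,r0)))"
      by (simp add: sum_distrib_left)
    also have "\<dots> = - (\<Sum>r'<q-1. l (r' + s) * g (r' + s) * (1\<^sub>m (q - 1)) $$ (r', r0))"
    proof (intro arg_cong[of _ _ uminus] sum.cong refl)
      fix r' assume rr: "r' \<in> {..<q-1}"
      have "(\<Sum>c<q-1. B $$ (r',c) * Inv $$ (c,r0)) = (B * Inv) $$ (r', r0)"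
        using mult_entry[OF Bc BI(3), of r' r0] rr r by simp
      also have "\<dots> = 1\<^sub>m (q - 1) $$ (r', r0)" by (simp only: BI(1))
      finally show "l (r' + s) * g (r' + s) * (\<Sum>c<q-1. B $$ (r',c) * Inv $$ (c,r0)) = l (r' + s) * g (r' + s) * 1\<^sub>m (q - 1) $$ (r', r0)" by simp
    qed
    also have "\<dots> = - l (r0 + s) * g (r0 + s)"
      using r by (simp add: sum.delta' if_distrib[of "\<lambda>x. _ * x"] cong: if_cong)
    finally show ?thesis .
  qed
  have Ac: "Hstar n L P Lam \<in> carrier_mat n n" unfolding Hstar_def using P Lam by auto
  have wy: "v \<bullet> y j = w j \<bullet> v + v \<bullet> y 0" if "v \<in> carrier_vec n" "j \<le> n + 1" for v j
    unfolding w_def using that dims[OF that(2)] dims[of 0]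
    by (simp add: scalar_prod_minus_distrib[of _ n] comm_scalar_prod[of _ n])
  have dotlin: "v \<bullet> finsum_vec TYPE(real) n (\<lambda>j. cf j \<cdot>\<^sub>v y j) J = (\<Sum>j\<in>J. cf j * (w j \<bullet> v)) + (\<Sum>j\<in>J. cf j) * (v \<bullet> y 0)"
    if v: "v \<in> carrier_vec n" and J: "J \<subseteq> {0..n+1}" for v cf J
  proof -
    have fin: "finite J" using J finite_subset by blast
    have "v \<bullet> finsum_vec TYPE(real) n (\<lambda>j. cf j \<cdot>\<^sub>v y j) J = (\<Sum>j\<in>J. v \<bullet> (cf j \<cdot>\<^sub>v y j))"
      by (rule dot_finsum[OF fin v]) (use J dims in auto)
    also have "\<dots> = (\<Sum>j\<in>J. cf j * (w j \<bullet> v) + cf j * (v \<bullet> y 0))"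
    proof (rule sum.cong[OF refl])
      fix j assume "j \<in> J"
      hence j: "j \<le> n + 1" using J by auto
      show "v \<bullet> (cf j \<cdot>\<^sub>v y j) = cf j * (w j \<bullet> v) + cf j * (v \<bullet> y 0)"
        using v dims[OF j] wy[OF v j] by (simp add: scalar_prod_smult_distrib[of _ n] algebra_simps)
    qed
    also have "\<dots> = (\<Sum>j\<in>J. cf j * (w j \<bullet> v)) + (\<Sum>j\<in>J. cf j) * (v \<bullet> y 0)"
      by (simp add: sum.distrib sum_distrib_right)
    finally show ?thesis .
  qed
  have ker: "w j \<bullet> col P k = 0" if k: "k < n" "Lam $$ (k,k) = 0" and j: "j \<in> {1..n+1}" "l j \<noteq> 0" for k j
  proof -
    have "l j * ((y j - y 0) \<bullet> col P k) = 0"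
    proof (rule Kern[OF dims aff bary1 bary2 l0 _ _ j(1)])
      show "col P k \<in> carrier_vec n" using P k by auto
      fix x :: "real vec" assume x: "x \<in> carrier_vec n"
      have "Gmat n y l *\<^sub>v col P k = 0\<^sub>v n"
        using eigvec[OF P Lam eig k(1)] k P by auto
      thus "x \<bullet> (Gmat n y l *\<^sub>v col P k) = 0" using x by simp
    qed
    thus ?thesis using j unfolding w_def by simp
  qed
  have C3: "\<forall>i\<in>Iplus n l.
         (L \<cdot>\<^sub>m 1\<^sub>m n - Hstar n L P Lam) *\<^sub>v
            finsum_vec TYPE(real) n (\<lambda>j. mu n y l P Lam i j \<cdot>\<^sub>v y j) (Iminus n l)
       = (L \<cdot>\<^sub>m 1\<^sub>m n - Hstar n L P Lam) *\<^sub>v (l i \<cdot>\<^sub>v y i)"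
  proof
    fix i assume iI: "i \<in> Iplus n l"
    hence i: "i \<in> {1..p}" using Ip by auto
    have i1: "i \<le> n + 1" using i s1 by auto
    define F where "F = finsum_vec TYPE(real) n (\<lambda>j. mu n y l P Lam i j \<cdot>\<^sub>v y j) (Iminus n l)"
    have Jm: "Iminus n l \<subseteq> {0..n+1}" unfolding Iminus_def by auto
    have Fc: "F \<in> carrier_vec n" unfolding F_def by (rule finsum_carrier) (use Jm dims in auto)
    have yic: "l i \<cdot>\<^sub>v y i \<in> carrier_vec n" using dims[OF i1] by auto
    have key: "v \<bullet> (F - l i \<cdot>\<^sub>v y i) = (\<Sum>r<q-1. Mm $$ (i - 1, r) * (w (r + s) \<bullet> v)) - l i * (w i \<bullet> v)"
      if v: "v \<in> carrier_vec n" for v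
    proof -
      have "v \<bullet> (F - l i \<cdot>\<^sub>v y i) = v \<bullet> F - v \<bullet> (l i \<cdot>\<^sub>v y i)"
        using v Fc yic by (simp add: scalar_prod_minus_distrib[of _ n])
      also have "v \<bullet> F = (\<Sum>j\<in>Iminus n l. mu n y l P Lam i j * (w j \<bullet> v)) + l i * (v \<bullet> y 0)"
        unfolding F_def dotlin[OF v Jm] using C1 iI by simp
      also have "v \<bullet> (l i \<cdot>\<^sub>v y i) = l i * (w i \<bullet> v) + l i * (v \<bullet> y 0)"
        using v dims[OF i1] wy[OF v i1] by (simp add: scalar_prod_smult_distrib[of _ n] algebra_simps)
      also have "(\<Sum>j\<in>Iminus n l. mu n y l P Lam i j * (w j \<bullet> v)) = (\<Sum>j\<in>{s..n+1}. mu n y l P Lam i j * (w j \<bullet> v))"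
        unfolding Im using s1 w0 v by (subst sum.insert) auto
      also have "\<dots> = (\<Sum>j\<in>{s..n+1}. Mm $$ (i - 1, j - s) * (w j \<bullet> v))"
        by (rule sum.cong[OF refl]) (simp add: muj)
      also have "\<dots> = (\<Sum>r<q-1. Mm $$ (i - 1, r + s - s) * (w (r + s) \<bullet> v))"
        by (rule shift_sum) (use s1 in auto)
      finally show ?thesis by simp
    qed
    have "(L \<cdot>\<^sub>m 1\<^sub>m n - Hstar n L P Lam) *\<^sub>v (F - l i \<cdot>\<^sub>v y i) = 0\<^sub>v n"
    proof (rule minus_zero[OF P Lam])
      show "F - l i \<cdot>\<^sub>v y i \<in> carrier_vec n" using Fc yic by auto
      fix k assume k: "k < n" and nk: "\<not> 0 < Lam $$ (k,k)"
      have vc: "col P k \<in> carrier_vec n" using P k by auto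
      show "col P k \<bullet> (F - l i \<cdot>\<^sub>v y i) = 0"
      proof (cases "Lam $$ (k,k) = 0")
        case True
        have "w i \<bullet> col P k = 0" using ker[OF k True, of i] i lpos[OF i] s1 by auto
        moreover have "w (r + s) \<bullet> col P k = 0" if "r < q - 1" for r
          using ker[OF k True, of "r+s"] lneg[of "r+s"] that s1 by auto
        ultimately show ?thesis unfolding key[OF vc] by simp
      next
        case False
        hence neg: "Lam $$ (k,k) < 0" using nk by auto
        hence "k \<in> set fl" unfolding fl_def using k by auto
        then obtain c where c: "c < length fl" "fl ! c = k" by (auto simp: in_set_conv_nth)
        have cq: "c < q - 1" using c kq by simp
        have cm: "col Pm c = col P k" using Pmcol[OF c(1)] c by simp
        have "(\<Sum>r<q-1. Mm $$ (i - 1, r) * (w (r + s) \<bullet> col P k)) = (\<Sum>r<q-1. Mm $$ (i - 1, r) * B $$ (r, c))"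
          by (rule sum.cong[OF refl]) (use Be cq cm in auto)
        also have "\<dots> = (Mm * B) $$ (i - 1, c)"
        proof -
          have "i - 1 < p" using i by auto
          thus ?thesis using mult_entry[OF Mc Bc, of "i - 1" c] cq by simp
        qed
        also have "\<dots> = X $$ (i - 1, c)" by (simp only: MB)
        also have "\<dots> = l (i - 1 + 1) * (w (i - 1 + 1) \<bullet> col Pm c)" by (rule Xe) (use i cq in auto)
        also have "\<dots> = l i * (w i \<bullet> col P k)" using i cm by simp
        finally show ?thesis unfolding key[OF vc] by simp
      qed
    qed
    thus "(L \<cdot>\<^sub>m 1\<^sub>m n - Hstar n L P Lam) *\<^sub>v F = (L \<cdot>\<^sub>m 1\<^sub>m n - Hstar n L P Lam) *\<^sub>v (l i \<cdot>\<^sub>v y i)"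
      using Fc yic Ac by (intro mv_eq_diff[of _ n]) auto
  qed
  have C4: "\<forall>j\<in>Iminus n l.
         (L \<cdot>\<^sub>m 1\<^sub>m n + Hstar n L P Lam) *\<^sub>v
            finsum_vec TYPE(real) n (\<lambda>i. mu n y l P Lam i j \<cdot>\<^sub>v y i) (Iplus n l)
       = - ((L \<cdot>\<^sub>m 1\<^sub>m n + Hstar n L P Lam) *\<^sub>v (l j \<cdot>\<^sub>v y j))"
  proof
    fix j assume jI: "j \<in> Iminus n l"
    have j1: "j \<le> n + 1" using jI unfolding Iminus_def by auto
    define F where "F = finsum_vec TYPE(real) n (\<lambda>i. mu n y l P Lam i j \<cdot>\<^sub>v y i) (Iplus n l)"
    have Jp: "Iplus n l \<subseteq> {0..n+1}" unfolding Iplus_def by auto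
    have Fc: "F \<in> carrier_vec n" unfolding F_def by (rule finsum_carrier) (use Jp dims in auto)
    have yjc: "l j \<cdot>\<^sub>v y j \<in> carrier_vec n" using dims[OF j1] by auto
    have key: "v \<bullet> (F + l j \<cdot>\<^sub>v y j) = (\<Sum>i=1..p. mu n y l P Lam i j * (w i \<bullet> v)) + l j * (w j \<bullet> v)"
      if v: "v \<in> carrier_vec n" for v
    proof -
      have "v \<bullet> (F + l j \<cdot>\<^sub>v y j) = v \<bullet> F + v \<bullet> (l j \<cdot>\<^sub>v y j)"
        using v Fc yjc by (simp add: scalar_prod_add_distrib[of _ n])
      also have "v \<bullet> F = (\<Sum>i\<in>Iplus n l. mu n y l P Lam i j * (w i \<bullet> v)) - l j * (v \<bullet> y 0)"
        unfolding F_def dotlin[OF v Jp] using C2 jI by simp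
      also have "v \<bullet> (l j \<cdot>\<^sub>v y j) = l j * (w j \<bullet> v) + l j * (v \<bullet> y 0)"
        using v dims[OF j1] wy[OF v j1] by (simp add: scalar_prod_smult_distrib[of _ n] algebra_simps)
      finally show ?thesis unfolding Ip by simp
    qed
    have "(L \<cdot>\<^sub>m 1\<^sub>m n + Hstar n L P Lam) *\<^sub>v (F + l j \<cdot>\<^sub>v y j) = 0\<^sub>v n"
    proof (rule plus_zero[OF P Lam])
      show "F + l j \<cdot>\<^sub>v y j \<in> carrier_vec n" using Fc yjc by auto
      fix k assume k: "k < n" and nk: "\<not> Lam $$ (k,k) < 0"
      have vc: "col P k \<in> carrier_vec n" using P k by auto
      show "col P k \<bullet> (F + l j \<cdot>\<^sub>v y j) = 0"
      proof (cases "Lam $$ (k,k) = 0")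
        case True
        have z: "w i \<bullet> col P k = 0" if "i \<in> Iplus n l \<union> Iminus n l" for i
        proof (cases "i = 0")
          case True thus ?thesis using w0 vc by simp
        next
          case False
          hence "i \<in> {1..n+1}" "l i \<noteq> 0" using that unfolding Iplus_def Iminus_def by auto
          thus ?thesis using ker[OF k True] by auto
        qed
        have "(\<Sum>i=1..p. mu n y l P Lam i j * (w i \<bullet> col P k)) = 0"
          by (rule sum.neutral) (use z Ip in auto)
        moreover have "w j \<bullet> col P k = 0" using z jI by auto
        ultimately show ?thesis unfolding key[OF vc] by simp
      next
        case False
        hence pos: "Lam $$ (k,k) > 0" using nk by auto
        define g where "g i = w i \<bullet> col P k" for i
        have orthg: "(\<Sum>i=1..p. l i * (w i \<bullet> col Pm c) * g i) = - (\<Sum>r<q-1. l (r + s) * B $$ (r,c) * g (r + s))"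
          if c: "c < q - 1" for c
        proof -
          have c': "c < length fl" using c kq by simp
          have cm: "col Pm c = col P (fl ! c)" by (rule Pmcol[OF c'])
          have ne: "fl ! c \<noteq> k" using flneg[OF c'] pos by auto
          have "col Pm c \<bullet> (Gmat n y l *\<^sub>v col P k) = 0"
            unfolding cm eigvec[OF P Lam eig k]
            using P k flneg(2)[OF c'] ne orthonormal[OF P k, of "fl ! c"]
            by (subst scalar_prod_smult_distrib[of _ n]) auto
          hence "(\<Sum>i=1..n+1. l i * (w i \<bullet> col Pm c) * g i) = 0"
            using W3[OF dims bary1 bary2 l0 cmc[of c] vc] unfolding g_def w_def by simp
          thus ?thesis using split[of "\<lambda>i. (w i \<bullet> col Pm c) * g i"] Be[OF _ c]
            by (simp add: mult.assoc)
        qed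
        show ?thesis
        proof (cases "j = 0")
          case False
          hence js: "j \<in> {s..n+1}" "j - s < q - 1" using jI Im s1 by auto
          have "(\<Sum>i=1..p. mu n y l P Lam i j * (w i \<bullet> col P k)) = (\<Sum>i=1..p. Mm $$ (i - 1, j - s) * g i)"
            unfolding g_def using js by (simp add: muj)
          also have "\<dots> = - l (j - s + s) * g (j - s + s)" by (rule Gsum[OF orthg js(2)])
          finally show ?thesis unfolding key[OF vc] g_def using js by simp
        next
          case True
          have "(\<Sum>i=1..p. mu n y l P Lam i 0 * g i) = (\<Sum>i=1..p. l i * g i) - (\<Sum>i=1..p. \<Sum>k'\<in>{s..n+1}. Mm $$ (i - 1, k' - s) * g i)"
            unfolding mu0 by (simp add: left_diff_distrib sum_subtractf sum_distrib_right)
          also have "(\<Sum>i=1..p. \<Sum>k'\<in>{s..n+1}. Mm $$ (i - 1, k' - s) * g i) = (\<Sum>k'\<in>{s..n+1}. \<Sum>i=1..p. Mm $$ (i - 1, k' - s) * g i)"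
            by (rule sum.swap)
          also have "\<dots> = (\<Sum>k'\<in>{s..n+1}. - l k' * g k')"
          proof (rule sum.cong[OF refl])
            fix k' assume k': "k' \<in> {s..n+1}"
            hence kk: "k' - s < q - 1" using s1 by auto
            show "(\<Sum>i=1..p. Mm $$ (i - 1, k' - s) * g i) = - l k' * g k'"
              using Gsum[OF orthg kk] k' by simp
          qed
          also have "\<dots> = - (\<Sum>r<q-1. l (r + s) * g (r + s))"
            by (subst shift_sum[of s "q-1"]) (use s1 in \<open>auto simp: sum_negf\<close>)
          also have "(\<Sum>i=1..p. l i * g i) - - (\<Sum>r<q-1. l (r + s) * g (r + s)) = (\<Sum>i=1..n+1. l i * g i)"
            using split[of g] by simp
          also have "\<dots> = 0" unfolding g_def by (rule W2'[OF vc])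
          finally have S: "(\<Sum>i=1..p. mu n y l P Lam i 0 * g i) = 0" .
          have "w 0 \<bullet> col P k = 0" using w0 vc by simp
          thus ?thesis using key[OF vc] S True unfolding g_def by simp
        qed
      qed
    qed
    thus "(L \<cdot>\<^sub>m 1\<^sub>m n + Hstar n L P Lam) *\<^sub>v F = - ((L \<cdot>\<^sub>m 1\<^sub>m n + Hstar n L P Lam) *\<^sub>v (l j \<cdot>\<^sub>v y j))"
      using Fc yjc Ac by (intro mv_eq_sum[of _ n]) auto
  qed
  show ?thesis using C1 C2 C3 C4 by blast
qed

end
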